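(* Let $p,q$ be odd primes with $q-p=2$, and let $D=D_1\cdots D_n$ with $D_1,\dots,D_n$ distinct primes, $2\nmid D$, $p\nmid D$, $q\nmid D$; put $\widehat{D_i}=D/D_i$. Let $E=E_+:y^2=x(x+pD)(x+qD)$, and for $d\in\mathbb{Q}(S,2)$ let $C_d: dw^2=d^2-2(p+q)Ddz^2+4D^2z^4$. (A) If $d\in\mathbb{Q}(S,2)$ satisfies $d<0$, or $p\mid d$, or $q\mid d$, then $d\notin S^{(\varphi)}(E/\mathbb{Q})$. Moreover, if $d>0$ then $C_d(\mathbb{R})\ne\emptyset$. (B) For $d=2$: (1) $C_2(\mathbb{Q}_2)\ne\emptyset$ iff $D(D-2p-2)\equiv1\pmod{16}$; (2) for each prime $l\mid pqD$, $C_2(\mathbb{Q}_l)\ne\emptyset$ iff $(\frac{2}{l})=1$, i.e. $l\equiv1,7\pmod8$. (C) For each $D_i$ ($1\le i\le n$): (1) $C_{D_i}(\mathbb{Q}_2)\ne\emptyset$ iff $D_i\equiv1\pmod4$; (2) for each prime $l\mid pq\widehat{D_i}$, $C_{D_i}(\mathbb{Q}_l)\ne\emptyset$ iff $(\frac{D_i}{l})=1$; (3) $C_{D_i}(\mathbb{Q}_{D_i})\ne\emptyset$ iff $(\frac{p\widehat{D_i}}{D_i})=(\frac{q\widehat{D_i}}{D_i})=1$.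
   Context: $(\frac{\cdot}{\cdot})$ is the Legendre symbol. $S=\{\infty,2,p,q,D_1,\dots,D_n\}$, $\mathbb{Q}(S,2)=\langle -1,2,p,q,D_1,\dots,D_n\rangle\subset\mathbb{Q}^\star/\mathbb{Q}^{\star2}$, elements represented by squarefree integers $d$ (so "$p\mid d$" refers to this representative). $\varphi:E\to E'$, $E':y^2=x^3-2(p+q)Dx^2+4D^2x$, is the $2$-isogeny $(x,y)\mapsto(y^2/x^2,\ y(pqD^2-x^2)/x^2)$, and $S^{(\varphi)}(E/\mathbb{Q})$ is the set of $d\in\mathbb{Q}(S,2)$ with $C_d(\mathbb{Q}_v)\ne\emptyset$ for all $v\in S$. *)

theory Defs
  imports "HOL-Number_Theory.Number_Theory" "HOL-Computational_Algebra.Squarefree"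
begin

text \<open>An l-adic integer is represented by a compatible sequence of integers
  x 0, x 1, ... with x (k+1) = x k (mod l^k); its value is the limit.
  A polynomial identity with integer coefficients holds in Z_l iff it holds
  modulo l^k for all k along such sequences.\<close>

definition ladic_seq :: "int \<Rightarrow> (nat \<Rightarrow> int) \<Rightarrow> bool" where
  "ladic_seq l x \<longleftrightarrow> (\<forall>k. [x (Suc k) = x k] (mod l ^ k))"

text \<open>Affine points: w = W / l^a, z = Z / l^b with
  W, Z in Z_l; clearing denominators gives the congruences below.  Points at infinity
  of the smooth model exist iff d is a square in Q_l, i.e. d l^(2a) = U^2, U in Z_l.\<close>

definition Cd_Ql :: "int \<Rightarrow> int \<Rightarrow> int \<Rightarrow> int \<Rightarrow> int \<Rightarrow> bool" where
  "Cd_Ql l p q D d \<longleftrightarrow>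
     (\<exists>a b :: nat. \<exists>W Z :: nat \<Rightarrow> int. ladic_seq l W \<and> ladic_seq l Z \<and>
        (\<forall>k. [d * (W k)^2 * l^(4*b) =
               l^(2*a) * (d^2 * l^(4*b) - 2*(p+q)*D*d * (Z k)^2 * l^(2*b) + 4*D^2 * (Z k)^4)]
             (mod l ^ k)))
   \<or> (\<exists>a :: nat. \<exists>U :: nat \<Rightarrow> int. ladic_seq l U \<and>
        (\<forall>k. [d * l^(2*a) = (U k)^2] (mod l ^ k)))"

text \<open>C_d(R) nonempty (affine real points, or points at infinity, which exist iff d > 0).\<close>

definition Cd_R :: "int \<Rightarrow> int \<Rightarrow> int \<Rightarrow> int \<Rightarrow> bool" where
  "Cd_R p q D d \<longleftrightarrow>
     (\<exists>w z :: real. of_int d * w^2 = of_int d ^ 2 - 2 * of_int (p+q) * of_int D * of_int d * z^2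
                      + 4 * of_int D ^ 2 * z^4) \<or> d > 0"

text \<open>Q(S,2) = <-1,2,p,q,D_1,...,D_n>, elements represented by squarefree integers.\<close>

definition QS2 :: "int \<Rightarrow> int \<Rightarrow> int list \<Rightarrow> int \<Rightarrow> bool" where
  "QS2 p q Ds d \<longleftrightarrow> squarefree d \<and>
     (\<forall>r. prime r \<and> r dvd d \<longrightarrow> r \<in> {2, p, q} \<union> set Ds)"

definition Selmer_phi :: "int \<Rightarrow> int \<Rightarrow> int list \<Rightarrow> int \<Rightarrow> bool" where
  "Selmer_phi p q Ds d \<longleftrightarrow> QS2 p q Ds d \<and> Cd_R p q (prod_list Ds) d \<and>
     (\<forall>l \<in> {2, p, q} \<union> set Ds. Cd_Ql l p q (prod_list Ds) d)"

end

theory Submission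
  imports Defs
begin

lemma decomp:
  fixes l x :: int
  assumes "prime l" "x \<noteq> 0"
  obtains m y where "x = l^m * y" "\<not> l dvd y"
  using multiplicity_decompose'[OF assms(2), of l] assms(1) by (metis not_prime_unit)

lemma pow_cancel_dvd:
  fixes l x :: int
  assumes "l \<noteq> 0" "l^(n+1) dvd l^n * x"
  shows "l dvd x"
  using assms by (simp add: power_Suc dvd_times_left_cancel_iff mult.assoc)

lemma cong_mono_pow:
  fixes l :: int
  assumes "[a = b] (mod l^N)" "M \<le> N"
  shows "[a = b] (mod l^M)"
  using assms by (meson cong_dvd_modulus le_imp_power_dvd)

lemma Glemma:
  fixes l c u W :: int
  assumes l: "prime l" and c: "\<not> l dvd c" and u: "\<not> l dvd u"
    and cg: "[c * W^2 * l^s = l^t * u] (mod l^N)" and N: "t + 3 \<le> N"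
  shows "even (s + t) \<and> (\<exists>w. \<not> l dvd w \<and> [c * w^2 = u] (mod l^3))"
proof -
  have l0: "l \<noteq> 0" using l by auto
  have cg': "[c * W^2 * l^s = l^t * u] (mod l^(t+3))" using cong_mono_pow[OF cg N] .
  have W0: "W \<noteq> 0"
  proof
    assume "W = 0"
    then have "[0 = l^t * u] (mod l^(t+1))" using cong_mono_pow[OF cg', of "t+1"] by simp
    then have "l^(t+1) dvd l^t * u" by (subst (asm) cong_sym_eq) (simp only: cong_0_iff)
    then show False using pow_cancel_dvd[OF l0] u by blast
  qed
  obtain m w where Wd: "W = l^m * w" and w: "\<not> l dvd w" using decomp[OF l W0] by blast
  have e: "c * W^2 * l^s = l^(2*m+s) * (c * w^2)"
    by (simp add: Wd power_mult_distrib power_add power_mult algebra_simps)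
  have lw: "\<not> l dvd c * w^2" using c w l by (simp add: prime_dvd_mult_iff prime_dvd_power_iff)
  consider "2*m+s < t" | "2*m+s > t" | "2*m+s = t" by linarith
  then show ?thesis
  proof cases
    case 1
    have d1: "l^(2*m+s+1) dvd (l^(2*m+s) * (c * w^2) - l^t*u)"
    proof -
      have "[c * W^2 * l^s = l^t * u] (mod l^(2*m+s+1))" using cong_mono_pow[OF cg', of "2*m+s+1"] 1 by simp
      then show ?thesis using e by (simp add: cong_iff_dvd_diff cong_sym_eq)
    qed
    have d2: "l^(2*m+s+1) dvd l^t*u" using 1 by (intro dvd_mult2 le_imp_power_dvd) simp
    have "l^(2*m+s+1) dvd l^(2*m+s) * (c * w^2)" using dvd_add[OF d1 d2] by simp
    then show ?thesis using pow_cancel_dvd[OF l0] lw by blast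
  next
    case 2
    have d1: "l^(t+1) dvd (l^(2*m+s) * (c * w^2) - l^t*u)"
    proof -
      have "[c * W^2 * l^s = l^t * u] (mod l^(t+1))" using cong_mono_pow[OF cg', of "t+1"] by simp
      then show ?thesis using e by (simp add: cong_iff_dvd_diff)
    qed
    have d2: "l^(t+1) dvd l^(2*m+s) * (c * w^2)" using 2
      by (intro dvd_mult2 le_imp_power_dvd) simp
    have "l^(t+1) dvd l^t * u" using dvd_diff[OF d2 d1] by simp
    then show ?thesis using pow_cancel_dvd[OF l0] u by blast
  next
    case 3
    have "l^(t+3) dvd c * W^2 * l^s - l^t * u" using cg' by (simp add: cong_iff_dvd_diff)
    also have "c * W^2 * l^s - l^t * u = l^t * (c * w^2 - u)" using e 3 by (simp add: algebra_simps)
    finally have "l^t * l^3 dvd l^t * (c * w^2 - u)" by (simp add: power_add)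
    then have "l^3 dvd (c*w^2 - u)" using l0 by (simp add: dvd_times_left_cancel_iff)
    then have "[c*w^2 = u] (mod l^3)" by (simp add: cong_iff_dvd_diff)
    moreover have "even (s+t)" using 3 by (metis add.commute add.left_commute dvd_triv_left even_add mult_2)
    ultimately show ?thesis using w by blast
  qed
qed

definition FF :: "int \<Rightarrow> int \<Rightarrow> int \<Rightarrow> int \<Rightarrow> int \<Rightarrow> int \<Rightarrow> int" where
  "FF p q D d X Y = d^2 * Y^4 - 2*(p+q)*D*d*X^2*Y^2 + 4*D^2*X^4"

lemma FF_hom: "FF p q D d (t*X) (t*Y) = t^4 * FF p q D d X Y"
  by (simp add: FF_def algebra_simps power_mult_distrib)

definition Qc :: "int \<Rightarrow> int \<Rightarrow> (int \<Rightarrow> int \<Rightarrow> int) \<Rightarrow> bool \<Rightarrow> int \<Rightarrow> int \<Rightarrow> bool" where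
  "Qc l d F G X Y \<longleftrightarrow> (\<forall>W s t. even s \<longrightarrow> even t \<longrightarrow>
      [d*W^2*l^s = l^t * F X Y] (mod l^(t+10)) \<longrightarrow> G)"

lemma affine_frame:
  fixes l d p q D :: int
  assumes l: "prime l"
    and cg: "\<forall>k. [d * (W k)^2 * l^(4*b) =
               l^(2*a) * (d^2 * l^(4*b) - 2*(p+q)*D*d * (Z k)^2 * l^(2*b) + 4*D^2 * (Z k)^4)]
             (mod l ^ k)"
    and I: "\<And>X. Qc l d (FF p q D d) G X 1"
    and II: "\<And>X j. \<not> l dvd X \<Longrightarrow> 1 \<le> j \<Longrightarrow> Qc l d (FF p q D d) G X (l^j)"
  shows G
proof -
  define K where "K = 2*a+4*b+10"
  define X0 where "X0 = Z K"
  have c0: "[d * (W K)^2 * l^(4*b) = l^(2*a) * FF p q D d X0 (l^b)] (mod l^K)"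
    using cg[rule_format, of K] unfolding X0_def FF_def by (simp add: power_mult[symmetric] mult.commute)
  show G
  proof (cases "l^b dvd X0")
    case True
    then obtain X' where X': "X0 = l^b * X'" by blast
    have "FF p q D d X0 (l^b) = l^(4*b) * FF p q D d X' 1"
      using FF_hom[of p q D d "l^b" X' 1] X' by (simp add: power_mult[symmetric] mult.commute)
    then have "[d * (W K)^2 * l^(4*b) = l^(2*a+4*b) * FF p q D d X' 1] (mod l^(2*a+4*b+10))"
      using c0 unfolding K_def by (simp add: power_add mult.assoc)
    moreover have "even (4*b)" "even (2*a+4*b)" by auto
    ultimately show G using I[of X'] unfolding Qc_def by blast
  next
    case False
    then have "X0 \<noteq> 0" by auto
    then obtain m X1 where X1: "X0 = l^m * X1" "\<not> l dvd X1" using decomp[OF l] by blast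
    have mb: "m < b"
    proof (rule ccontr)
      assume "\<not> m < b"
      then have "l^b dvd l^m" by (simp add: le_imp_power_dvd)
      then show False using False X1 by auto
    qed
    define j where "j = b - m"
    have bj: "b = m + j" and j1: "1 \<le> j" using mb unfolding j_def by auto
    have "FF p q D d X0 (l^b) = l^(4*m) * FF p q D d X1 (l^j)"
      using FF_hom[of p q D d "l^m" X1 "l^j"] X1 bj by (simp add: power_add power_mult[symmetric] mult.commute)
    then have "[d * (W K)^2 * l^(4*b) = l^(2*a+4*m) * FF p q D d X1 (l^j)] (mod l^K)"
      using c0 by (simp add: power_add mult.assoc)
    then have "[d * (W K)^2 * l^(4*b) = l^(2*a+4*m) * FF p q D d X1 (l^j)] (mod l^(2*a+4*m+10))"
      by (rule cong_mono_pow) (use mb in \<open>simp add: K_def\<close>)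
    moreover have "even (4*b)" "even (2*a+4*m)" by auto
    ultimately show G using II[OF X1(2) j1] unfolding Qc_def by blast
  qed
qed

lemma infinity_frame:
  fixes l d c :: int
  assumes l: "prime l" and "\<forall>k. [d * l^(2*a) = (U k)^2] (mod l ^ k)"
    and dc: "d = l^e * c" and c: "\<not> l dvd c"
  shows "even e \<and> (\<exists>w. \<not> l dvd w \<and> [w^2 = c] (mod l^3))"
proof -
  have cg: "[1 * (U (2*a+e+3))^2 * l^0 = l^(2*a+e) * c] (mod l^(2*a+e+3))"
    using assms(2)[rule_format, of "2*a+e+3"] dc by (simp add: cong_sym_eq power_add mult_ac)
  have l1: "\<not> l dvd 1" using l not_prime_unit by blast
  from Glemma[OF l l1 c cg] l have "even (0 + (2*a+e)) \<and> (\<exists>w. \<not> l dvd w \<and> [1 * w^2 = c] (mod l^3))"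
    by (simp add: not_prime_unit)
  then show ?thesis by simp
qed

lemma Qcase:
  fixes l d c u :: int
  assumes l: "prime l" and dc: "d = l^e * c" and c: "\<not> l dvd c"
    and F: "F X Y = l^h * u" and u: "\<not> l dvd u" and h: "h \<le> 7"
    and G: "even (e+h) \<Longrightarrow> \<exists>w. \<not> l dvd w \<and> [c*w^2 = u] (mod l^3) \<Longrightarrow> G"
  shows "Qc l d F G X Y"
  unfolding Qc_def
proof (intro allI impI)
  fix W s t assume es: "even (s::nat)" and et: "even (t::nat)" and cg: "[d*W^2*l^s = l^t * F X Y] (mod l^(t+10))"
  have "[c*W^2*l^(s+e) = l^(t+h) * u] (mod l^(t+10))"
    using cg dc F by (simp add: power_add mult_ac)
  from Glemma[OF l c u this] h have "even (s+e+(t+h)) \<and> (\<exists>w. \<not> l dvd w \<and> [c * w^2 = u] (mod l^3))"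
    by simp
  then show G using G es et by auto
qed

lemma onlyif_frame:
  fixes l d c p q D :: int
  assumes l: "prime l" and C: "Cd_Ql l p q D d"
    and dc: "d = l^e * c" and c: "\<not> l dvd c"
    and Inf: "even e \<Longrightarrow> \<exists>w. \<not> l dvd w \<and> [w^2 = c] (mod l^3) \<Longrightarrow> G"
    and I: "\<And>X. Qc l d (FF p q D d) G X 1"
    and II: "\<And>X j. \<not> l dvd X \<Longrightarrow> 1 \<le> j \<Longrightarrow> Qc l d (FF p q D d) G X (l^j)"
  shows G
  using C unfolding Cd_Ql_def
proof (elim disjE exE conjE)
  fix a b W Z
  assume "\<forall>k. [d * (W k)^2 * l^(4*b) =
               l^(2*a) * (d^2 * l^(4*b) - 2*(p+q)*D*d * (Z k)^2 * l^(2*b) + 4*D^2 * (Z k)^4)]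
             (mod l ^ k)"
  from affine_frame[OF l this I II] show G .
next
  fix a U assume "\<forall>k. [d * l^(2*a) = (U k)^2] (mod l ^ k)"
  from infinity_frame[OF l this dc c] Inf show G by blast
qed

lemma build_seq:
  fixes l :: int
  assumes "P 0 x0" and step: "\<And>n x. P n x \<Longrightarrow> \<exists>y. P (Suc n) y \<and> [y = x] (mod l^n)"
  shows "\<exists>W. ladic_seq l W \<and> (\<forall>n. P n (W n))"
proof -
  obtain f where f: "\<And>n x. P n x \<Longrightarrow> P (Suc n) (f n x) \<and> [f n x = x] (mod l^n)"
    using step by metis
  define W where "W = rec_nat x0 f"
  have W0: "W 0 = x0" and WS: "\<And>n. W (Suc n) = f n (W n)" by (simp_all add: W_def)
  have PW: "P n (W n)" for n
    by (induction n) (use assms(1) W0 WS f in auto)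
  have "ladic_seq l W" unfolding ladic_seq_def using PW WS f by auto
  then show ?thesis using PW by blast
qed

lemma odd_prime_not_dvd2:
  fixes l :: int
  assumes "prime l" "l \<noteq> 2"
  shows "\<not> l dvd 2"
proof
  assume "l dvd 2"
  then have "l \<le> 2" by (simp add: zdvd_imp_le)
  with prime_ge_2_int[OF assms(1)] assms(2) show False by simp
qed

lemma hensel_odd:
  fixes l u x0 :: int
  assumes l: "prime l" "l \<noteq> 2" and u: "\<not> l dvd u" and x0: "[x0^2 = u] (mod l)"
  shows "\<exists>W. ladic_seq l W \<and> (\<forall>k. [(W k)^2 = u] (mod l^k))"
proof -
  have step: "\<exists>y. [y^2 = u] (mod l^(Suc n + 1)) \<and> [y = x] (mod l^n)"
    if hx: "[x^2 = u] (mod l^(n+1))" for n x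
  proof -
    have "l^(n+1) dvd u - x^2" using cong_sym[OF hx] unfolding cong_iff_dvd_diff .
    then obtain m where m: "u - x^2 = l^(n+1) * m" by (rule dvdE)
    have "[x^2 = u] (mod l)" using cong_mono_pow[OF hx, of 1] by simp
    then have lxu: "l dvd x^2 - u" unfolding cong_iff_dvd_diff .
    have lx: "\<not> l dvd x"
    proof
      assume "l dvd x"
      then have "l dvd x^2" by (simp add: power2_eq_square)
      then have "l dvd x^2 - (x^2 - u)" using lxu by (rule dvd_diff)
      then show False using u by simp
    qed
    have "\<not> l dvd 2*x" using lx odd_prime_not_dvd2[OF l] l(1) by (simp add: prime_dvd_mult_iff)
    then have "coprime l (2*x)" by (rule prime_imp_coprime[OF l(1)])
    then have "coprime (2*x) l" by (rule coprime_commute[THEN iffD1])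
    then obtain i where i: "[2*x*i = 1] (mod l)" using cong_solve_coprime_int by blast
    then have "l dvd 2*x*i - 1" unfolding cong_iff_dvd_diff .
    then obtain r where r: "2*x*i - 1 = l*r" by (rule dvdE)
    define L where "L = l^(n+1)"
    define y where "y = x + m*i*L"
    have uu: "u = x^2 + L*m" using m unfolding L_def by simp
    have "y^2 - u = L*m*(2*x*i - 1) + (m*i)^2 * (L*L)"
      unfolding y_def uu by (simp add: power2_eq_square algebra_simps)
    also have "\<dots> = (L*l) * (m*r + (m*i)^2 * l^n)"
      unfolding r L_def by (simp add: power2_eq_square algebra_simps)
    also have "L*l = l^(Suc n+1)" unfolding L_def by simp
    finally have "[y^2 = u] (mod l^(Suc n+1))" unfolding cong_iff_dvd_diff by (rule dvdI)
    moreover have "[y = x] (mod l^n)"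
      unfolding y_def cong_iff_dvd_diff L_def by simp
    ultimately show ?thesis by blast
  qed
  obtain W where W: "ladic_seq l W" "\<forall>n. [(W n)^2 = u] (mod l^(n+1))"
    using build_seq[where P="\<lambda>n x. [x^2 = u] (mod l^(n+1))" and l=l, OF _ step] x0 by auto
  have "[(W k)^2 = u] (mod l^k)" for k using cong_mono_pow[OF W(2)[rule_format, of k], of k] by simp
  then show ?thesis using W(1) by blast
qed

lemma hensel_two:
  fixes u x0 :: int
  assumes u: "odd u" and x0: "[x0^2 = u] (mod 8)"
  shows "\<exists>W. ladic_seq 2 W \<and> (\<forall>k. [(W k)^2 = u] (mod 2^k))"
proof -
  have step: "\<exists>y. [y^2 = u] (mod 2^(Suc n + 3)) \<and> [y = x] (mod 2^n)"
    if hx: "[x^2 = u] (mod 2^(n+3))" for n x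
  proof -
    have "2^(n+3) dvd u - x^2" using cong_sym[OF hx] unfolding cong_iff_dvd_diff .
    then obtain m where m: "u - x^2 = 2^(n+3) * m" by (rule dvdE)
    have "odd x"
    proof
      assume "even x"
      then have "even (x^2)" by simp
      moreover have "even (u - x^2)" using m by (simp add: power_add)
      ultimately show False using u by simp
    qed
    then have "even (x - 1)" by simp
    then obtain r where r: "x - 1 = 2*r" by (rule dvdE)
    define L where "L = (2::int)^(n+2)"
    define y where "y = x + m*L"
    have "2*L = 2^(n+3)" unfolding L_def by (simp add: power_add)
    then have uu: "u = x^2 + (2*L)*m" using m by simp
    have "y^2 - u = (2*L)*m*(x - 1) + m^2 * (L*L)"
      unfolding y_def uu by (simp add: power2_eq_square algebra_simps)
    also have "\<dots> = (2*L*2) * (m*r + m^2 * 2^n)"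
      unfolding r L_def by (simp add: power2_eq_square algebra_simps)
    also have "2*L*2 = (2::int)^(Suc n+3)" unfolding L_def by (simp add: power_add)
    finally have "[y^2 = u] (mod 2^(Suc n+3))" unfolding cong_iff_dvd_diff by (rule dvdI)
    moreover have "[y = x] (mod 2^n)"
      unfolding y_def cong_iff_dvd_diff L_def by simp
    ultimately show ?thesis by blast
  qed
  obtain W where W: "ladic_seq 2 W" "\<forall>n. [(W n)^2 = u] (mod 2^(n+3))"
    using build_seq[where P="\<lambda>n x. [x^2 = u] (mod 2^(n+3))" and l=2, OF _ step] x0 by auto
  have "[(W k)^2 = u] (mod 2^k)" for k using cong_mono_pow[OF W(2)[rule_format, of k], of k] by simp
  then show ?thesis using W(1) by blast
qed

lemma legendre2:
  fixes l :: int
  assumes l: "prime l" "l > 2"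
  shows "Legendre 2 l = 1 \<longleftrightarrow> l mod 8 = 1 \<or> l mod 8 = 7"
proof -
  have nl: "prime (nat l)" "2 < nat l" using l by (auto simp: prime_nat_iff_prime)
  have n2: "[2 \<noteq> 0] (mod int (nat l))"
  proof
    assume "[2 = 0] (mod int (nat l))"
    then have "l dvd 2" using l by (simp add: cong_0_iff)
    then have "l \<le> 2" by (simp add: zdvd_imp_le)
    then show False using l by simp
  qed
  interpret G: GAUSS "nat l" 2 using nl n2 by unfold_locales auto
  define h where "h = (l - 1) div 2"
  have hl: "2*h < l" "0 \<le> h" using l unfolding h_def by auto
  have E: "G.E = (\<lambda>x. 2*x) ` {h div 2<..h}"
  proof -
    have "G.E = ((\<lambda>x. x mod l) ` ((\<lambda>x. x * 2) ` {0<..h})) \<inter> {h<..}"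
      using l by (simp add: G.E_def G.C_def G.B_def G.A_def h_def)
    also have "(\<lambda>x. x mod l) ` ((\<lambda>x. x * 2) ` {0<..h}) = (\<lambda>x. 2*x) ` {0<..h}"
    proof -
      have "(\<lambda>x. x mod l) ` ((\<lambda>x. x * 2) ` {0<..h}) = (\<lambda>x. (x*2) mod l) ` {0<..h}" by (simp add: image_image)
      also have "\<dots> = (\<lambda>x. 2*x) ` {0<..h}"
        by (intro image_cong refl) (use hl in auto)
      finally show ?thesis .
    qed
    also have "(\<lambda>x. 2*x) ` {0<..h} \<inter> {h<..} = (\<lambda>x. 2*x) ` {h div 2<..h}"
      using hl by (auto simp: image_iff)
    finally show ?thesis .
  qed
  have "card ((\<lambda>x::int. 2*x) ` {h div 2<..h}) = card {h div 2<..h}"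
    by (rule card_image) (auto simp: inj_on_def)
  then have cE: "card G.E = nat (h - h div 2)" using E by simp
  have "Legendre 2 l = (-1) ^ card G.E" using G.gauss_lemma l by simp
  then have Lg: "Legendre 2 l = (-1) ^ nat (h - h div 2)" using cE by simp
  have oddl: "odd l" using l by (metis prime_odd_int)
  define k where "k = l div 8"
  define j where "j = l mod 8"
  have kj: "l = 8*k + j" "0 \<le> j" "j < 8" unfolding k_def j_def by auto
  have jodd: "j = 1 \<or> j = 3 \<or> j = 5 \<or> j = 7" using kj oddl by presburger
  have k0: "k \<ge> 0" using kj l by linarith
  have "nat (h - h div 2) = (if j = 1 then 2*nat k else if j = 3 then 2*nat k+1 else if j = 5 then 2*nat k+1 else 2*nat k+2)"
    using jodd kj k0 unfolding h_def by auto
  then show ?thesis using Lg jodd j_def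
    by (auto simp: power_add power_mult)
qed

lemma ndvd_sq:
  fixes l x :: int
  assumes "prime l" "\<not> l dvd x"
  shows "\<not> l dvd x^2"
  using assms by (simp add: prime_dvd_power_iff)

lemma ndvd_mult:
  fixes l x y :: int
  assumes "prime l" "\<not> l dvd x" "\<not> l dvd y"
  shows "\<not> l dvd x*y"
  using assms by (simp add: prime_dvd_mult_iff)

lemma ndvd_congr:
  fixes l a b :: int
  assumes "l dvd a - b" "\<not> l dvd b"
  shows "\<not> l dvd a"
proof
  assume "l dvd a"
  then have "l dvd a - (a - b)" using assms(1) by (rule dvd_diff)
  then show False using assms(2) by simp
qed

lemma caseA1:
  fixes l p q D d :: int
  assumes l: "prime l" "l \<noteq> 2" and ld: "l dvd d" and sq: "\<not> l^2 dvd d" and lD: "\<not> l dvd D"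
  shows "\<not> Cd_Ql l p q D d"
proof
  assume C: "Cd_Ql l p q D d"
  obtain c where dc: "d = l * c" using ld by blast
  have c: "\<not> l dvd c" using sq dc by (auto simp: power2_eq_square)
  have l2: "\<not> l dvd 2" using odd_prime_not_dvd2[OF l] .
  have dc1: "d = l^1 * c" using dc by simp
  have key: "\<not> l dvd FF p q D d X Y" if "\<not> l dvd X" for X Y
  proof -
    have "FF p q D d X Y - (2*D*X^2)^2 = d * (d*Y^4 - 2*(p+q)*D*X^2*Y^2)"
      unfolding FF_def by (simp add: power2_eq_square power4_eq_xxxx algebra_simps)
    then have "l dvd FF p q D d X Y - (2*D*X^2)^2" using ld by simp
    moreover have "\<not> l dvd (2*D*X^2)^2"
      using l2 lD that l(1) by (simp add: prime_dvd_mult_iff prime_dvd_power_iff)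
    ultimately show ?thesis by (rule ndvd_congr)
  qed
  show False
  proof (rule onlyif_frame[OF l(1) C dc1 c])
    assume "even (1::nat)" then show False by simp
  next
    fix X
    show "Qc l d (FF p q D d) False X 1"
    proof (cases "l dvd X")
      case False
      show ?thesis
        by (rule Qcase[where F="FF p q D d" and X=X and Y=1 and h=0 and u="FF p q D d X 1", OF l(1) dc1 c]) (use key[OF False] in auto)
    next
      case True
      then obtain X1 where X1: "X = l * X1" by blast
      define u where "u = c^2 - 2*(p+q)*D*c*l*X1^2 + 4*D^2*l^2*X1^4"
      have F: "FF p q D d X 1 = l^2 * u"
        unfolding FF_def u_def X1 dc by (simp add: power2_eq_square power4_eq_xxxx algebra_simps)
      have "u - c^2 = l * (- 2*(p+q)*D*c*X1^2 + 4*D^2*l*X1^4)"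
        unfolding u_def by (simp add: power2_eq_square power4_eq_xxxx algebra_simps)
      then have "l dvd u - c^2" by simp
      moreover have "\<not> l dvd c^2" using ndvd_sq[OF l(1) c] .
      ultimately have u: "\<not> l dvd u" by (rule ndvd_congr)
      show ?thesis
        by (rule Qcase[where F="FF p q D d" and X=X and Y=1 and h=2, OF l(1) dc1 c F u]) auto
    qed
  next
    fix X and j :: nat
    assume X: "\<not> l dvd X"
    show "Qc l d (FF p q D d) False X (l^j)"
      by (rule Qcase[where F="FF p q D d" and X=X and Y="l^j" and h=0 and u="FF p q D d X (l^j)", OF l(1) dc1 c]) (use key[OF X] in auto)
  qed
qed

lemma QR_from:
  fixes l c w u s :: int
  assumes l: "prime l" and c: "\<not> l dvd c" and w: "\<not> l dvd w"
    and cw: "[c*w^2 = u] (mod l^3)" and us: "l dvd u - s^2"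
  shows "Legendre c l = 1"
proof -
  have "coprime w l" using prime_imp_coprime[OF l w] by (simp add: coprime_commute)
  then obtain i where i: "[w*i = 1] (mod l)" using cong_solve_coprime_int by blast
  have cw1: "[c*w^2 = u] (mod l)" using cong_mono_pow[OF cw, of 1] by simp
  have us1: "[u = s^2] (mod l)" using us by (simp add: cong_iff_dvd_diff)
  have "[c = c * (w*i)^2] (mod l)"
  proof -
    have "[c * 1^2 = c * (w*i)^2] (mod l)" using i by (intro cong_mult cong_refl cong_pow) (rule cong_sym)
    then show ?thesis by simp
  qed
  also have "c * (w*i)^2 = (c*w^2) * i^2" by (simp add: power_mult_distrib)
  also have "[(c*w^2) * i^2 = u * i^2] (mod l)" using cw1 by (intro cong_mult cong_refl)
  also have "[u * i^2 = s^2 * i^2] (mod l)" using us1 by (intro cong_mult cong_refl)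
  also have "s^2 * i^2 = (s*i)^2" by (simp add: power_mult_distrib)
  finally have "[(s*i)^2 = c] (mod l)" by (rule cong_sym)
  then have "QuadRes l c" unfolding QuadRes_def by blast
  moreover have "\<not> [c = 0] (mod l)" using c by (simp add: cong_0_iff)
  ultimately show ?thesis unfolding Legendre_def by simp
qed

lemma caseQR:
  fixes l p q D c A \<kappa> :: int
  assumes l: "prime l" "l \<noteq> 2" and c: "\<not> l dvd c" and k: "\<not> l dvd \<kappa>" and q: "q = p + 2"
    and hF: "\<And>X Y. FF p q D c X Y = \<kappa>^2 * ((A*X^2 - (p+1)*Y^2)^2 - p*q*Y^4)"
    and cases: "(l dvd p*q \<and> \<not> l^2 dvd p*q \<and> \<not> l dvd A) \<or> (l dvd A \<and> \<not> l^2 dvd A \<and> \<not> l dvd p*q)"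
    and C: "Cd_Ql l p q D c"
  shows "Legendre c l = 1"
proof -
  have dc: "c = l^0 * c" by simp
  show ?thesis
  proof (rule onlyif_frame[OF l(1) C dc c])
    assume "\<exists>w. \<not> l dvd w \<and> [w^2 = c] (mod l^3)"
    then obtain w where w: "\<not> l dvd w" "[w^2 = c] (mod l^3)" by blast
    have "[(w^2) * 1 = c] (mod l)" using cong_mono_pow[OF w(2), of 1] by simp
    then have "QuadRes l c" unfolding QuadRes_def by auto
    moreover have "\<not> [c = 0] (mod l)" using c by (simp add: cong_0_iff)
    ultimately show "Legendre c l = 1" unfolding Legendre_def by simp
  next
    fix X
    define V where "V = A*X^2 - (p+1)"
    have F1: "FF p q D c X 1 = \<kappa>^2 * (V^2 - p*q)" using hF[of X 1] unfolding V_def by simp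
    show "Qc l c (FF p q D c) (Legendre c l = 1) X 1"
    proof (cases "l dvd p*q")
      case True
      show ?thesis
      proof (cases "l dvd V")
        case False
        define u where "u = \<kappa>^2 * (V^2 - p*q)"
        have e: "u - (\<kappa>*V)^2 = (p*q) * (-(\<kappa>^2))" unfolding u_def by (simp add: power_mult_distrib algebra_simps)
        have us: "l dvd u - (\<kappa>*V)^2" unfolding e using True by (rule dvd_mult2)
        have u: "\<not> l dvd u" by (rule ndvd_congr[OF us]) (use l(1) k False in \<open>simp add: prime_dvd_mult_iff prime_dvd_power_iff\<close>)
        show ?thesis
          by (rule Qcase[where F="FF p q D c" and X=X and Y=1 and h=0, OF l(1) dc c _ u]) (use F1 u_def QR_from[OF l(1) c _ _ us] in auto)
      next
        case lV: True
        obtain V1 where V1: "V = l*V1" using lV by blast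
        obtain m where m: "p*q = l*m" using True by blast
        have lm: "\<not> l dvd m" using cases True m by (auto simp: power2_eq_square)
        define u where "u = \<kappa>^2 * (l*V1^2 - m)"
        have Fu: "FF p q D c X 1 = l^1 * u" unfolding F1 u_def V1 m by (simp add: power2_eq_square algebra_simps)
        have e: "u - \<kappa>^2 * (-m) = l * (\<kappa>^2 * V1^2)" unfolding u_def by (simp add: algebra_simps)
        have us: "l dvd u - \<kappa>^2 * (-m)" unfolding e by simp
        have u: "\<not> l dvd u" by (rule ndvd_congr[OF us]) (use l(1) k lm in \<open>simp add: prime_dvd_mult_iff prime_dvd_power_iff\<close>)
        show ?thesis
          by (rule Qcase[where F="FF p q D c" and X=X and Y=1 and h=1, OF l(1) dc c Fu u]) auto
      qed
    next
      case npq: False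
      then have lA: "l dvd A" using cases by blast
      define u where "u = \<kappa>^2 * (V^2 - p*q)"
      have e: "u - \<kappa>^2 = A * (\<kappa>^2 * X^2 * (A*X^2 - 2*(p+1)))"
        unfolding u_def V_def q by (simp add: power2_eq_square algebra_simps)
      have us: "l dvd u - \<kappa>^2" unfolding e using lA by (rule dvd_mult2)
      have us': "l dvd u - (\<kappa>*1)^2" using us by simp
      have u: "\<not> l dvd u" by (rule ndvd_congr[OF us]) (use l(1) k in \<open>simp add: prime_dvd_mult_iff prime_dvd_power_iff\<close>)
      show ?thesis
        by (rule Qcase[where F="FF p q D c" and X=X and Y=1 and h=0, OF l(1) dc c _ u]) (use F1 u_def QR_from[OF l(1) c _ _ us'] in auto)
    qed
  next
    fix X and j :: nat
    assume X: "\<not> l dvd X" and j: "1 \<le> j"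
    obtain j' where j': "j = Suc j'" using j by (cases j) auto
    define M where "M = l^(2*j'+1)"
    have lM: "l dvd M" unfolding M_def by simp
    have Y2: "(l^j)^2 = l*M"
    proof -
      have "(l^j)^2 = l^(j*2)" by (rule power_mult[symmetric])
      also have "j*2 = Suc (2*j'+1)" using j' by simp
      also have "l^(Suc (2*j'+1)) = l*M" unfolding M_def by (rule power_Suc)
      finally show ?thesis .
    qed
    have Y4: "(l^j)^4 = l^2*M^2"
    proof -
      have "(l^j)^4 = ((l^j)^2)^2" using power_mult[of "l^j" 2 2] by simp
      then show ?thesis using Y2 by (simp add: power_mult_distrib)
    qed
    have F2: "FF p q D c X (l^j) = \<kappa>^2 * ((A*X^2 - (p+1)*(l*M))^2 - p*q*(l^2*M^2))"
      using hF[of X "l^j"] Y2 Y4 by simp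
    show "Qc l c (FF p q D c) (Legendre c l = 1) X (l^j)"
    proof (cases "l dvd A")
      case False
      define V where "V = A*X^2 - (p+1)*(l*M)"
      define u where "u = \<kappa>^2 * (V^2 - p*q*(l^2*M^2))"
      have e: "u - (\<kappa>*V)^2 = l * (-(\<kappa>^2*p*q*l*M^2))" unfolding u_def by (simp add: power_mult_distrib power2_eq_square algebra_simps)
      have us: "l dvd u - (\<kappa>*V)^2" unfolding e by simp
      have eV: "V - A*X^2 = l * (-(p+1)*M)" unfolding V_def by (simp add: algebra_simps)
      have lV: "\<not> l dvd V" by (rule ndvd_congr[of l V "A*X^2"]) (use eV l(1) X False in \<open>simp_all add: prime_dvd_mult_iff prime_dvd_power_iff\<close>)
      have u: "\<not> l dvd u" by (rule ndvd_congr[OF us]) (use l(1) k lV in \<open>simp add: prime_dvd_mult_iff prime_dvd_power_iff\<close>)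
      show ?thesis
        by (rule Qcase[where F="FF p q D c" and X=X and Y="l^j" and h=0, OF l(1) dc c _ u]) (use F2 u_def V_def QR_from[OF l(1) c _ _ us] in auto)
    next
      case True
      then obtain A1 where A1: "A = l*A1" by blast
      have lA1: "\<not> l dvd A1" using cases True A1 by (auto simp: power2_eq_square)
      define u where "u = \<kappa>^2 * ((A1*X^2 - (p+1)*M)^2 - p*q*M^2)"
      have Fu: "FF p q D c X (l^j) = l^2 * u" unfolding F2 u_def A1 by (simp add: power2_eq_square algebra_simps)
      have e: "u - (\<kappa>*A1*X^2)^2 = M * (\<kappa>^2 * ((p+1)^2*M - 2*A1*X^2*(p+1) - p*q*M))"
        unfolding u_def by (simp add: power_mult_distrib power2_eq_square algebra_simps)
      have us: "l dvd u - (\<kappa>*A1*X^2)^2" unfolding e using lM by (rule dvd_mult2)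
      have u: "\<not> l dvd u" by (rule ndvd_congr[OF us]) (use l(1) k lA1 X in \<open>simp add: prime_dvd_mult_iff prime_dvd_power_iff\<close>)
      show ?thesis
        by (rule Qcase[where F="FF p q D c" and X=X and Y="l^j" and h=2, OF l(1) dc c Fu u]) (use QR_from[OF l(1) c _ _ us] in auto)
    qed
  qed
qed

lemma odd_sq8:
  fixes x :: int
  assumes "odd x"
  obtains t where "x^2 = 8*t + 1"
proof -
  obtain s where s: "x = 2*s + 1" using assms by (metis oddE)
  have "even (s*(s+1))" by simp
  then obtain v where v: "s*(s+1) = 2*v" by blast
  have "x^2 = 8*v + 1" unfolding s using v by (simp add: power2_eq_square algebra_simps)
  then show ?thesis using that by blast
qed

lemma caseB1only:
  fixes p q D :: int
  assumes q: "q = p + 2" and p: "odd p" and D: "odd D" and C: "Cd_Ql 2 p q D 2"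
  shows "[D*(D - 2*p - 2) = 1] (mod 16)"
proof -
  let ?G = "[D*(D - 2*p - 2) = 1] (mod 16)"
  have l: "prime (2::int)" by simp
  have dc: "(2::int) = 2^1 * 1" by simp
  have c: "\<not> (2::int) dvd 1" by simp
  have hF: "FF p q D 2 X Y = 2^2 * (Y^4 - 2*(p+1)*D*X^2*Y^2 + D^2*X^4)" for X Y
    unfolding FF_def q by (simp add: power2_eq_square algebra_simps)
  have oddcase: "Qc 2 2 (FF p q D 2) ?G X Y" if "odd (Y^4 - 2*(p+1)*D*X^2*Y^2 + D^2*X^4)" for X Y
    by (rule Qcase[where F="FF p q D 2" and X=X and Y=Y and h=2, OF l dc c hF that]) auto
  show ?thesis
  proof (rule onlyif_frame[OF l C dc c])
    assume "even (1::nat)" then show ?G by simp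
  next
    fix X :: int
    show "Qc 2 2 (FF p q D 2) ?G X 1"
    proof (cases "even X")
      case True
      show ?thesis by (rule oddcase) (use True D in simp)
    next
      case False
      obtain t where t: "X^2 = 8*t + 1" using odd_sq8[OF False] .
      obtain t' where t': "D^2 = 8*t' + 1" using odd_sq8[OF D] .
      obtain P where P: "p + 1 = 2*P" using p by (metis oddE add.commute add_left_cancel mult_2 one_add_one add.assoc)
      define E where "E = t'*(32*t^2+8*t) + 4*t^2 + t - 2*P*D*t"
      define u where "u = 1 + 4*t' - 2*P*D + 8*E"
      have X4: "X^4 = (8*t+1)^2" using t by (metis power_mult numeral_Bit0 numeral_One mult_2 one_add_one power2_eq_square power_add)
      have Fu: "FF p q D 2 X 1 = 2^3 * u"
        unfolding hF u_def E_def P X4 t using t' by (simp add: power2_eq_square algebra_simps)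
      have u: "\<not> 2 dvd u" unfolding u_def by simp
      show ?thesis
      proof (rule Qcase[where F="FF p q D 2" and X=X and Y=1 and h=3, OF l dc c Fu u])
        assume "\<exists>w. \<not> 2 dvd w \<and> [1 * w^2 = u] (mod 2^3)"
        then obtain w where w: "odd w" "[w^2 = u] (mod 8)" by auto
        obtain s where s: "w^2 = 8*s + 1" using odd_sq8[OF w(1)] .
        have "8 dvd u - w^2" using w(2) by (simp add: cong_iff_dvd_diff dvd_diff_commute)
        then have "8 dvd (4*t' - 2*P*D) + 8*(E - s)" unfolding u_def s by (simp add: algebra_simps)
        then have "8 dvd 4*t' - 2*P*D" by (simp add: dvd_add_left_iff)
        then obtain n where n: "4*t' - 2*P*D = 8*n" by blast
        have "D*(D - 2*p - 2) - 1 = 16*n"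
        proof -
          have "D*(D - 2*p - 2) - 1 = D^2 - 2*(p+1)*D - 1" by (simp add: power2_eq_square algebra_simps)
          also have "\<dots> = 2*(4*t' - 2*P*D)" unfolding t' P by (simp add: algebra_simps)
          finally show ?thesis using n by simp
        qed
        then show ?G by (simp add: cong_iff_dvd_diff)
      qed simp
    qed
  next
    fix X :: int and j :: nat
    assume X: "\<not> 2 dvd X" and j: "1 \<le> j"
    have "even ((2::int)^j)" using j by simp
    then show "Qc 2 2 (FF p q D 2) ?G X (2^j)"
      by (intro oddcase) (use X D in simp)
  qed
qed

lemma r_mod4:
  fixes r w k :: int
  assumes w: "odd w" and cg: "[r * w^2 = r^2 * k] (mod 2^3)" and k: "4 dvd k - 1" and r: "odd r"
  shows "[r = 1] (mod 4)"
proof -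
  obtain s where s: "w^2 = 8*s + 1" using odd_sq8[OF w] .
  obtain t where t: "r^2 = 8*t + 1" using odd_sq8[OF r] .
  have "8 dvd r * w^2 - r^2 * k" using cg by (simp add: cong_iff_dvd_diff)
  then have "4 dvd r * w^2 - r^2 * k" by (rule dvd_trans[rotated]) simp
  moreover have "r * w^2 - r^2 * k = (r - 1) - (k - 1) + 4*(2*r*s - 2*t*k)" unfolding s t by (simp add: algebra_simps)
  ultimately have "4 dvd (r - 1) - (k - 1) + 4*(2*r*s - 2*t*k)" by simp
  then have "4 dvd (r - 1) - (k - 1)" by (simp add: dvd_add_left_iff)
  then have "4 dvd (r - 1) - (k - 1) + (k - 1)" using k by (rule dvd_add)
  then show ?thesis by (simp add: cong_iff_dvd_diff)
qed

lemma caseC1only: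
  fixes p q D r R :: int
  assumes q: "q = p + 2" and p: "odd p" and r: "odd r" and R: "odd R" and D: "D = r*R"
    and C: "Cd_Ql 2 p q D r"
  shows "[r = 1] (mod 4)"
proof -
  let ?G = "[r = 1] (mod 4)"
  have l: "prime (2::int)" by simp
  have dc: "r = 2^0 * r" by simp
  have c: "\<not> (2::int) dvd r" using r by simp
  have hF: "FF p q D r X Y = r^2 * (Y^4 - 4*(p+1)*R*X^2*Y^2 + 4*R^2*X^4)" for X Y
    unfolding FF_def q D by (simp add: power2_eq_square algebra_simps)
  show ?G
  proof (rule onlyif_frame[OF l C dc c])
    assume "\<exists>w. \<not> 2 dvd w \<and> [w^2 = r] (mod 2^3)"
    then obtain w where w: "odd w" "[w^2 = r] (mod 8)" by auto
    obtain s where s: "w^2 = 8*s + 1" using odd_sq8[OF w(1)] .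
    have "8 dvd w^2 - r" using w(2) by (simp add: cong_iff_dvd_diff)
    then have "4 dvd w^2 - r" by (rule dvd_trans[rotated]) simp
    moreover have "4 dvd 8*s" by simp
    ultimately have "4 dvd (w^2 - r) - 8*s" by (rule dvd_diff)
    also have "(w^2 - r) - 8*s = 1 - r" unfolding s by simp
    finally have "4 dvd r - 1" by (simp add: dvd_diff_commute)
    then show ?G by (simp add: cong_iff_dvd_diff)
  next
    fix X :: int
    define k where "k = 1 - 4*(p+1)*R*X^2 + 4*R^2*X^4"
    have Fu: "FF p q D r X 1 = 2^0 * (r^2 * k)" unfolding hF k_def by simp
    have k4: "4 dvd k - 1" unfolding k_def by simp
    have u: "\<not> 2 dvd r^2 * k" using r unfolding k_def by simp
    show "Qc 2 r (FF p q D r) ?G X 1"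
      by (rule Qcase[where F="FF p q D r" and X=X and Y=1 and h=0, OF l dc c Fu u]) (use r_mod4[OF _ _ k4 r] in auto)
  next
    fix X :: int and j :: nat
    assume X: "\<not> 2 dvd X" and j: "1 \<le> j"
    obtain j' where j': "j = Suc j'" using j by (cases j) auto
    define Y' where "Y' = (2::int)^j'"
    have Y: "(2::int)^j = 2*Y'" unfolding Y'_def j' by simp
    define k where "k = 4*Y'^4 - 4*(p+1)*R*X^2*Y'^2 + R^2*X^4"
    have Fu: "FF p q D r X (2^j) = 2^2 * (r^2 * k)" unfolding hF k_def Y by (simp add: power2_eq_square power4_eq_xxxx algebra_simps)
    have oRX: "odd (R*X^2)" using R X by simp
    obtain t where t: "(R*X^2)^2 = 8*t+1" using odd_sq8[OF oRX] .
    have "k - 1 = 4*(Y'^4 - (p+1)*R*X^2*Y'^2 + 2*t)" unfolding k_def using t by (simp add: power2_eq_square power4_eq_xxxx algebra_simps)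
    then have k4: "4 dvd k - 1" by simp
    obtain m where m: "k - 1 = 4*m" using k4 by blast
    have "k = 2*(2*m) + 1" using m by simp
    then have "odd k" by simp
    then have u: "\<not> 2 dvd r^2 * k" using r by simp
    show "Qc 2 r (FF p q D r) ?G X (2^j)"
      by (rule Qcase[where F="FF p q D r" and X=X and Y="2^j" and h=2, OF l dc c Fu u]) (use r_mod4[OF _ _ k4 r] in auto)
  qed
qed

lemma QR1:
  fixes l a x y :: int
  assumes l: "prime l" and a: "\<not> l dvd a" and y: "\<not> l dvd y" and d: "l dvd x^2 - a*y^2"
  shows "Legendre a l = 1"
proof -
  have "coprime y l" using prime_imp_coprime[OF l y] by (simp add: coprime_commute)
  then obtain i where i: "[y*i = 1] (mod l)" using cong_solve_coprime_int by blast
  have "[a = a * (y*i)^2] (mod l)"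
  proof -
    have "[a * 1^2 = a * (y*i)^2] (mod l)" using i by (intro cong_mult cong_refl cong_pow) (rule cong_sym)
    then show ?thesis by simp
  qed
  also have "a * (y*i)^2 = (a*y^2) * i^2" by (simp add: power_mult_distrib)
  also have "[(a*y^2) * i^2 = x^2 * i^2] (mod l)" using d by (intro cong_mult cong_refl) (simp add: cong_iff_dvd_diff dvd_diff_commute)
  also have "x^2 * i^2 = (x*i)^2" by (simp add: power_mult_distrib)
  finally have "[(x*i)^2 = a] (mod l)" by (rule cong_sym)
  then have "QuadRes l a" unfolding QuadRes_def by blast
  moreover have "\<not> [a = 0] (mod l)" using a by (simp add: cong_0_iff)
  ultimately show ?thesis unfolding Legendre_def by simp
qed

lemma caseC3only:
  fixes p q D r R :: int
  assumes q: "q = p + 2" and r: "prime r" "r \<noteq> 2" and D: "D = r*R"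
    and rR: "\<not> r dvd R" and rp: "\<not> r dvd p" and rq: "\<not> r dvd q"
    and C: "Cd_Ql r p q D r"
  shows "Legendre (p*R) r = 1 \<and> Legendre (q*R) r = 1"
proof -
  let ?G = "Legendre (p*R) r = 1 \<and> Legendre (q*R) r = 1"
  have dc: "r = r^1 * 1" by simp
  have c: "\<not> r dvd 1" using r(1) not_prime_unit by blast
  have hF: "FF p q D r X Y = r^2 * ((2*R*X^2 - (p+1)*Y^2)^2 - p*q*Y^4)" for X Y
    unfolding FF_def q D by (simp add: power2_eq_square power4_eq_xxxx algebra_simps)
  show ?G
  proof (rule onlyif_frame[OF r(1) C dc c])
    assume "even (1::nat)" then show ?G by simp
  next
    fix X :: int
    define k where "k = (2*R*X^2 - (p+1))^2 - p*q"
    have Fk: "FF p q D r X 1 = r^2 * k" unfolding hF k_def by simp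
    show "Qc r r (FF p q D r) ?G X 1"
    proof (cases "r dvd k")
      case False
      show ?thesis by (rule Qcase[where F="FF p q D r" and X=X and Y=1 and h=2, OF r(1) dc c Fk False]) auto
    next
      case True
      have k1: "k - 1 = X * (X * (4*R^2*X^2 - 4*(p+1)*R))" unfolding k_def q by (simp add: power2_eq_square algebra_simps)
      have rX: "\<not> r dvd X"
      proof
        assume "r dvd X"
        then have "r dvd k - 1" unfolding k1 by simp
        with True have "r dvd k - (k - 1)" by (rule dvd_diff)
        then show False using c by simp
      qed
      have r2X: "\<not> r dvd 2*X" using rX odd_prime_not_dvd2[OF r] r(1) by (simp add: prime_dvd_mult_iff)
      have kp: "k = (2*R*X^2 - 1)^2 - (p*R)*(2*X)^2" unfolding k_def q by (simp add: power2_eq_square algebra_simps)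
      have kq: "k = (2*R*X^2 + 1)^2 - (q*R)*(2*X)^2" unfolding k_def q by (simp add: power2_eq_square algebra_simps)
      have "Legendre (p*R) r = 1"
        by (rule QR1[OF r(1) _ r2X]) (use True kp r(1) rp rR in \<open>simp_all add: prime_dvd_mult_iff\<close>)
      moreover have "Legendre (q*R) r = 1"
        by (rule QR1[OF r(1) _ r2X]) (use True kq r(1) rq rR in \<open>simp_all add: prime_dvd_mult_iff\<close>)
      ultimately show ?thesis unfolding Qc_def by blast
    qed
  next
    fix X :: int and j :: nat
    assume X: "\<not> r dvd X" and j: "1 \<le> j"
    define Y where "Y = r^j"
    have rY: "r dvd Y" unfolding Y_def using j by (simp add: dvd_power)
    define k where "k = (2*R*X^2 - (p+1)*Y^2)^2 - p*q*Y^4"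
    have Fk: "FF p q D r X (r^j) = r^2 * k" unfolding hF k_def Y_def by simp
    have e: "k - (2*R*X^2)^2 = Y * (Y * ((p+1)^2*Y^2 - 4*R*X^2*(p+1) - p*q*Y^2))"
      unfolding k_def by (simp add: power2_eq_square power4_eq_xxxx algebra_simps)
    have "r dvd k - (2*R*X^2)^2" unfolding e using rY by simp
    moreover have "\<not> r dvd (2*R*X^2)^2" using X rR odd_prime_not_dvd2[OF r] r(1) by (simp add: prime_dvd_mult_iff prime_dvd_power_iff)
    ultimately have u: "\<not> r dvd k" by (rule ndvd_congr)
    show "Qc r r (FF p q D r) ?G X (r^j)"
      by (rule Qcase[where F="FF p q D r" and X=X and Y="r^j" and h=2, OF r(1) dc c Fk u]) auto
  qed
qed

lemma ladic_const: "ladic_seq l (\<lambda>k. z)" unfolding ladic_seq_def by simp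

lemma ladic_mult: "ladic_seq l S \<Longrightarrow> ladic_seq l (\<lambda>k. c * S k)"
  unfolding ladic_seq_def by (auto intro: cong_mult cong_refl)

lemma if_affine:
  fixes l d p q D m \<kappa> z :: int
  assumes S: "ladic_seq l S" "\<forall>k. [(S k)^2 = m] (mod l^k)"
    and e: "d*\<kappa>^2*m = d^2 - 2*(p+q)*D*d*z^2 + 4*D^2*z^4"
  shows "Cd_Ql l p q D d"
proof -
  have "[d * (\<kappa> * S k)^2 * l^(4*0) =
               l^(2*0) * (d^2 * l^(4*0) - 2*(p+q)*D*d * z^2 * l^(2*0) + 4*D^2 * z^4)]
             (mod l ^ k)" for k
  proof -
    have "[d*\<kappa>^2 * (S k)^2 = d*\<kappa>^2 * m] (mod l^k)" using S(2) by (intro cong_mult cong_refl) auto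
    then show ?thesis using e by (simp add: power_mult_distrib mult_ac)
  qed
  then show ?thesis unfolding Cd_Ql_def using ladic_mult[OF S(1), of \<kappa>] ladic_const[of l z] by blast
qed

lemma if_inf:
  fixes l d p q D :: int
  assumes U: "ladic_seq l U" "\<forall>k. [(U k)^2 = d] (mod l^k)"
  shows "Cd_Ql l p q D d"
proof -
  have "\<forall>k. [d * l^(2*0) = (U k)^2] (mod l ^ k)" using U(2) by (simp add: cong_sym_eq)
  then show ?thesis unfolding Cd_Ql_def using U(1) by blast
qed

lemma QRif:
  fixes l c p q D :: int
  assumes l: "prime l" "l \<noteq> 2" and L: "Legendre c l = 1"
  shows "Cd_Ql l p q D c"
proof -
  have c: "\<not> l dvd c" using L unfolding Legendre_def by (auto simp: cong_0_iff split: if_splits)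
  obtain y where y: "[y^2 = c] (mod l)" using L unfolding Legendre_def QuadRes_def by (auto split: if_splits)
  from hensel_odd[OF l c y] obtain U where "ladic_seq l U" "\<forall>k. [(U k)^2 = c] (mod l^k)" by blast
  then show ?thesis by (rule if_inf)
qed

lemma B1if:
  fixes p q D :: int
  assumes q: "q = p + 2" and h: "[D*(D - 2*p - 2) = 1] (mod 16)"
  shows "Cd_Ql 2 p q D 2"
proof -
  have "16 dvd D*(D - 2*p - 2) - 1" using h by (simp add: cong_iff_dvd_diff)
  then obtain n where n: "D*(D - 2*p - 2) - 1 = 16*n" by blast
  define m where "m = 1 + 8*n"
  have "[1^2 = m] (mod 8)" unfolding m_def by (simp add: cong_iff_dvd_diff)
  moreover have "odd m" unfolding m_def by simp
  ultimately obtain S where S: "ladic_seq 2 S" "\<forall>k. [(S k)^2 = m] (mod 2^k)" using hensel_two by blast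
  have e: "2*2^2*m = 2^2 - 2*(p+q)*D*2*1^2 + 4*D^2*1^4"
  proof -
    have "D^2 = D*(D - 2*p - 2) + 2*p*D + 2*D" by (simp add: power2_eq_square algebra_simps)
    then show ?thesis unfolding m_def q using n by (simp add: algebra_simps)
  qed
  show ?thesis by (rule if_affine[OF S e])
qed

lemma C1if:
  fixes p q D r R :: int
  assumes q: "q = p + 2" and p: "odd p" and r: "odd r" and R: "odd R" and D: "D = r*R"
    and h: "[r = 1] (mod 4)"
  shows "Cd_Ql 2 p q D r"
proof -
  have "4 dvd r - 1" using h by (simp add: cong_iff_dvd_diff)
  then obtain n where n: "r = 4*n + 1" by (metis dvdE add.commute diff_add_cancel)
  show ?thesis
  proof (cases "even n")
    case True
    then obtain n' where n': "n = 2*n'" by blast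
    have "[1^2 = r] (mod 8)" unfolding n n' by (simp add: cong_iff_dvd_diff)
    from hensel_two[OF r this] obtain S where S: "ladic_seq 2 S" "\<forall>k. [(S k)^2 = r] (mod 2^k)" by blast
    have e: "r*1^2*r = r^2 - 2*(p+q)*D*r*0^2 + 4*D^2*0^4" by (simp add: power2_eq_square)
    show ?thesis by (rule if_affine[OF S e])
  next
    case False
    then obtain n' where n': "n = 2*n' + 1" by (metis oddE)
    define k1 where "k1 = 1 - 4*(p+1)*R + 4*R^2"
    obtain P where P: "p + 1 = 2*P" using p by (metis oddE add.commute add_left_cancel mult_2 one_add_one add.assoc)
    obtain R' where R': "R = 2*R' + 1" using R by (metis oddE)
    have k1e: "k1 = 5 + 8*(2*R'^2 + 2*R' - P*R)"
      unfolding k1_def P R' by (simp add: power2_eq_square algebra_simps)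
    have "[1^2 = r*k1] (mod 8)"
    proof -
      have "r*k1 - 1 = 8*(3 + 5*n' + (8*n'+5)*(2*R'^2 + 2*R' - P*R))" unfolding n n' k1e by (simp add: algebra_simps)
      then show ?thesis by (simp add: cong_iff_dvd_diff dvd_diff_commute)
    qed
    moreover have "odd (r*k1)" using r k1e by simp
    ultimately obtain S where S: "ladic_seq 2 S" "\<forall>k. [(S k)^2 = r*k1] (mod 2^k)" using hensel_two by blast
    have e: "r*1^2*(r*k1) = r^2 - 2*(p+q)*D*r*1^2 + 4*D^2*1^4"
      unfolding k1_def q D by (simp add: power2_eq_square algebra_simps)
    show ?thesis by (rule if_affine[OF S e])
  qed
qed

lemma C3if:
  fixes p q D r R :: int
  assumes q: "q = p + 2" and r: "prime r" "r \<noteq> 2" and D: "D = r*R"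
    and rR: "\<not> r dvd R" and rp: "\<not> r dvd p" and rq: "\<not> r dvd q"
    and Lp: "Legendre (p*R) r = 1" and Lq: "Legendre (q*R) r = 1"
    and if_affine: "\<And>S m \<kappa> z. ladic_seq r S \<Longrightarrow> \<forall>k. [(S k)^2 = m] (mod r^k) \<Longrightarrow>
        r*\<kappa>^2*m = r^2 - 2*(p+q)*D*r*z^2 + 4*D^2*z^4 \<Longrightarrow> Cd_Ql r p q D r"
  shows "Cd_Ql r p q D r"
proof -
  have r2: "\<not> r dvd 2" using odd_prime_not_dvd2[OF r] .
  obtain t1 where t1: "[t1^2 = p*R] (mod r)" using Lp unfolding Legendre_def QuadRes_def by (auto split: if_splits)
  obtain t2 where t2: "[t2^2 = q*R] (mod r)" using Lq unfolding Legendre_def QuadRes_def by (auto split: if_splits)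
  have "r dvd t1^2 - p*R" using t1 unfolding cong_iff_dvd_diff .
  then obtain \<alpha>1 where a1: "t1^2 - p*R = r*\<alpha>1" by (rule dvdE)
  have "r dvd t2^2 - q*R" using t2 unfolding cong_iff_dvd_diff .
  then obtain \<alpha>2 where a2: "t2^2 - q*R = r*\<alpha>2" by (rule dvdE)
  have r2R: "\<not> r dvd 2*R" using r2 rR r(1) by (simp add: prime_dvd_mult_iff)
  have "coprime (2*R) r" using prime_imp_coprime[OF r(1) r2R] by (simp add: coprime_commute)
  then obtain i where i: "[2*R*i = 1] (mod r)" using cong_solve_coprime_int by blast
  have "r dvd 2*R*i - 1" using i unfolding cong_iff_dvd_diff .
  then obtain \<beta> where b: "2*R*i - 1 = r*\<beta>" by (rule dvdE)
  define z0 where "z0 = (t1 + t2) * i"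
  define K where "K = 2*R*z0^2 - 2*t1*z0 - 1"
  have "2*R*K = r*(\<beta>*(2+r*\<beta>)*(t1+t2)^2 - 2*t1*(t1+t2)*\<beta> + \<alpha>2 - \<alpha>1)"
  proof -
    have w: "2*R*i = 1 + r*\<beta>" using b by simp
    have t1s: "t1^2 = p*R + r*\<alpha>1" using a1 by simp
    have t2s: "t2^2 = q*R + r*\<alpha>2" using a2 by simp
    have "2*R*K = (2*R*i)^2*(t1+t2)^2 - 2*t1*(2*R*i)*(t1+t2) - 2*R"
      unfolding K_def z0_def by (simp add: power2_eq_square algebra_simps)
    also have "\<dots> = (1 + r*\<beta>)^2*(t1+t2)^2 - 2*t1*(1 + r*\<beta>)*(t1+t2) - 2*R" unfolding w ..
    also have "\<dots> = r*(\<beta>*(2+r*\<beta>)*(t1+t2)^2 - 2*t1*(t1+t2)*\<beta>) + (t2^2 - t1^2 - 2*R)"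
      by (simp add: power2_eq_square algebra_simps)
    also have "t2^2 - t1^2 - 2*R = r*(\<alpha>2 - \<alpha>1)" unfolding t1s t2s q by (simp add: algebra_simps)
    finally show ?thesis by (simp add: algebra_simps)
  qed
  then have "r dvd 2*R*K" by simp
  then have "r dvd K" using r2R r(1) by (simp add: prime_dvd_mult_iff)
  then obtain \<kappa> where kap: "K = r*\<kappa>" by blast
  define kk where "kk = (\<lambda>z::int. 4*R^2*z^4 - 4*(p+1)*R*z^2 + 1)"
  define m0 where "m0 = 4*z0^2*\<alpha>1 + 4*t1*z0*\<kappa> + r*\<kappa>^2"
  have kz0: "kk z0 = r * m0"
  proof -
    have h1: "2*R*z0^2 - 1 = 2*t1*z0 + r*\<kappa>" using kap unfolding K_def by simp
    have "kk z0 = (2*R*z0^2 - 1)^2 - p*R*(2*z0)^2" unfolding kk_def by (simp add: power2_eq_square power4_eq_xxxx algebra_simps)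
    also have "\<dots> = (2*t1*z0 + r*\<kappa>)^2 - p*R*(2*z0)^2" unfolding h1 ..
    also have "\<dots> = 4*z0^2*(t1^2 - p*R) + r*(4*t1*z0*\<kappa> + r*\<kappa>^2)" by (simp add: power2_eq_square algebra_simps)
    also have "\<dots> = r*m0" unfolding a1 m0_def by (simp add: algebra_simps)
    finally show ?thesis .
  qed
  define V where "V = 2*R*z0^2 - (p+1)"
  define dk where "dk = 8*R*z0*V"
  have rz0: "\<not> r dvd z0"
  proof
    assume "r dvd z0"
    moreover have "kk z0 - 1 = z0 * (z0 * (4*R^2*z0^2 - 4*(p+1)*R))" unfolding kk_def by (simp add: power2_eq_square power4_eq_xxxx algebra_simps)
    ultimately have "r dvd kk z0 - 1" by simp
    moreover have "r dvd kk z0" using kz0 by simp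
    ultimately have "r dvd kk z0 - (kk z0 - 1)" by (metis dvd_diff)
    then show False using r(1) by (simp add: not_prime_unit)
  qed
  have rV: "\<not> r dvd V"
  proof
    assume "r dvd V"
    then have "r dvd V^2" by (simp add: power2_eq_square)
    moreover have "V^2 - p*q = kk z0" unfolding V_def kk_def q by (simp add: power2_eq_square power4_eq_xxxx algebra_simps)
    ultimately have "r dvd V^2 - (V^2 - p*q)" using kz0 by (metis dvd_diff dvd_triv_left)
    then show False using rp rq r(1) by (simp add: prime_dvd_mult_iff)
  qed
  have r8: "\<not> r dvd 8"
  proof
    assume "r dvd 8"
    then have "r dvd 2^3" by simp
    then show False using r2 r(1) prime_dvd_power by blast
  qed
  have rdk: "\<not> r dvd dk" unfolding dk_def using r8 rR rz0 rV r(1) by (simp add: prime_dvd_mult_iff)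
  have "coprime dk r" using prime_imp_coprime[OF r(1) rdk] by (simp add: coprime_commute)
  then obtain j where j: "[dk*j = 1] (mod r)" using cong_solve_coprime_int by blast
  define t where "t = j*(1 - m0)"
  define z where "z = z0 + t*r"
  define E2 where "E2 = 24*R^2*z0^2 - 4*(p+1)*R + 16*R^2*z0*(t*r) + 4*R^2*(t*r)^2"
  define u0 where "u0 = m0 + t*dk + r*t^2*E2"
  have kz: "kk z = r*u0"
  proof -
    have "kk z = kk z0 + (t*r)*dk + (t*r)^2*E2"
      unfolding kk_def z_def dk_def V_def E2_def by (simp add: power2_eq_square power4_eq_xxxx algebra_simps)
    then show ?thesis unfolding kz0 u0_def by (simp add: power2_eq_square algebra_simps)
  qed
  have u01: "[u0 = 1] (mod r)"
  proof -
    have "[dk*j*(1-m0) = 1*(1-m0)] (mod r)" using j by (intro cong_mult cong_refl)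
    then have "[m0 + t*dk + r*t^2*E2 = m0 + 1*(1-m0) + 0] (mod r)"
      unfolding t_def by (intro cong_add cong_refl) (auto simp: mult_ac cong_0_iff)
    then show ?thesis unfolding u0_def by simp
  qed
  have ru0: "\<not> r dvd u0"
  proof
    assume "r dvd u0"
    then have "[u0 = 0] (mod r)" by (simp add: cong_0_iff)
    then have "[1 = 0] (mod r)" using u01 by (metis cong_sym cong_trans)
    then show False using r(1) by (simp add: cong_0_iff not_prime_unit)
  qed
  have "[1^2 = u0] (mod r)" using u01 by (simp add: cong_sym)
  from hensel_odd[OF r ru0 this] obtain S where S: "ladic_seq r S" "\<forall>k. [(S k)^2 = u0] (mod r^k)"
    by blast
  have e: "r*r^2*u0 = r^2 - 2*(p+q)*D*r*z^2 + 4*D^2*z^4"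
  proof -
    have "r^2 - 2*(p+q)*D*r*z^2 + 4*D^2*z^4 = r^2 * kk z" unfolding kk_def D q by (simp add: power2_eq_square power4_eq_xxxx algebra_simps)
    then show ?thesis unfolding kz by (simp add: power2_eq_square)
  qed
  show ?thesis by (rule if_affine[OF S e])
qed

lemma prod_primes_pos: "\<forall>r\<in>set Ds. prime (r::int) \<Longrightarrow> prod_list Ds > 0"
  by (induction Ds) (auto simp: prime_gt_0_int)

lemma elem_dvd_prod: "(r::int) \<in> set Ds \<Longrightarrow> r dvd prod_list Ds"
  by (induction Ds) auto

lemma prime_dvd_prod_primes:
  fixes l :: int
  assumes "\<forall>r\<in>set Ds. prime r" "prime l" "l dvd prod_list Ds"
  shows "l \<in> set Ds"
  using assms
proof (induction Ds)
  case Nil then show ?case by (simp add: not_prime_unit)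
next
  case (Cons a Ds)
  then have "l dvd a \<or> l dvd prod_list Ds" by (simp add: prime_dvd_mult_iff)
  then show ?case
  proof
    assume "l dvd a"
    then have "l = a" using Cons.prems by (simp add: primes_dvd_imp_eq)
    then show ?thesis by simp
  next
    assume "l dvd prod_list Ds" then show ?thesis using Cons by simp
  qed
qed

lemma sqfree_prod:
  fixes l :: int
  assumes "distinct Ds" "\<forall>r\<in>set Ds. prime r" "prime l"
  shows "\<not> l^2 dvd prod_list Ds"
  using assms
proof (induction Ds)
  case Nil
  have "l > 1" using Nil prime_gt_1_int by blast
  then have "l^2 > 1" by (simp add: one_less_power)
  then show ?case by (simp add: zdvd_not_zless)
next
  case (Cons a Ds)
  have a: "prime a" "a \<notin> set Ds" using Cons.prems by auto
  show ?case
  proof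
    assume h: "l^2 dvd prod_list (a # Ds)"
    show False
    proof (cases "l = a")
      case True
      then have "a * a dvd a * prod_list Ds" using h by (simp add: power2_eq_square)
      then have "a dvd prod_list Ds" using a(1) by (simp add: prime_gt_0_int)
      then have "a \<in> set Ds" using prime_dvd_prod_primes[of Ds a] Cons.prems by auto
      then show False using a by simp
    next
      case False
      then have "\<not> l dvd a" using primes_dvd_imp_eq[OF Cons.prems(3) a(1)] by blast
      then have "coprime (l^2) a" using prime_imp_coprime[OF Cons.prems(3)] by simp
      then have "l^2 dvd prod_list Ds" using h by (simp add: coprime_dvd_mult_right_iff)
      then show False using Cons by simp
    qed
  qed
qed

theorem proposition2p1:
  fixes p q D :: int and Ds :: "int list"
  assumes "prime p" and "prime q" and "odd p" and "odd q" and "q - p = 2"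
    and "distinct Ds" and "\<forall>r \<in> set Ds. prime r"
    and "D = prod_list Ds"
    and "\<not> 2 dvd D" and "\<not> p dvd D" and "\<not> q dvd D"
  shows
    \<comment> \<open>(A)\<close>
    "(\<forall>d. QS2 p q Ds d \<and> (d < 0 \<or> p dvd d \<or> q dvd d) \<longrightarrow> \<not> Selmer_phi p q Ds d)
     \<and> (\<forall>d. QS2 p q Ds d \<and> d > 0 \<longrightarrow> Cd_R p q D d)
     \<comment> \<open>(B)\<close>
     \<and> (Cd_Ql 2 p q D 2 \<longleftrightarrow> [D * (D - 2*p - 2) = 1] (mod 16))
     \<and> (\<forall>l. prime l \<and> l dvd p * q * D \<longrightarrow>
          (Cd_Ql l p q D 2 \<longleftrightarrow> Legendre 2 l = 1)
          \<and> (Legendre 2 l = 1 \<longleftrightarrow> l mod 8 = 1 \<or> l mod 8 = 7))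
     \<comment> \<open>(C)\<close>
     \<and> (\<forall>i < length Ds.
          (Cd_Ql 2 p q D (Ds ! i) \<longleftrightarrow> [Ds ! i = 1] (mod 4))
          \<and> (\<forall>l. prime l \<and> l dvd p * q * (D div Ds ! i) \<longrightarrow>
                 (Cd_Ql l p q D (Ds ! i) \<longleftrightarrow> Legendre (Ds ! i) l = 1))
          \<and> (Cd_Ql (Ds ! i) p q D (Ds ! i) \<longleftrightarrow>
                 Legendre (p * (D div Ds ! i)) (Ds ! i) = 1
                 \<and> Legendre (q * (D div Ds ! i)) (Ds ! i) = 1))"
proof -
  note pp = assms(1) and pq = assms(2) and op = assms(3) and oq = assms(4)
  note dist = assms(6) and prs = assms(7) and Dd = assms(8) and D2 = assms(9) and pD = assms(10) and qD = assms(11)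
  have q: "q = p + 2" using assms(5) by simp
  have Dpos: "D > 0" using prod_primes_pos[OF prs] Dd by simp
  have oD: "odd D" using D2 by simp
  have p2: "p \<noteq> 2" "q \<noteq> 2" using op oq by auto
  have pnq: "\<not> p dvd q"
  proof
    assume "p dvd q" then have "p = q" using primes_dvd_imp_eq[OF pp pq] by simp
    then show False using q by simp
  qed
  have qnp: "\<not> q dvd p"
  proof
    assume "q dvd p" then have "p = q" using primes_dvd_imp_eq[OF pq pp] by simp
    then show False using q by simp
  qed
  have lD_in: "l \<in> set Ds" if "prime l" "l dvd D" for l using prime_dvd_prod_primes[OF prs that(1)] that Dd by simp
  have sqD: "\<not> l^2 dvd D" if "prime l" for l using sqfree_prod[OF dist prs that] Dd by simp
  have hF2: "FF p q D 2 X Y = 2^2 * ((D*X^2 - (p+1)*Y^2)^2 - p*q*Y^4)" for X Y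
    unfolding FF_def q by (simp add: power2_eq_square power4_eq_xxxx algebra_simps)
  have pq_cases: "\<not> l^2 dvd p*q" if "prime l" "l dvd p*q" for l
  proof
    assume h: "l^2 dvd p*q"
    have "l dvd p \<or> l dvd q" using that by (simp add: prime_dvd_mult_iff)
    then have "l = p \<or> l = q" using primes_dvd_imp_eq[OF that(1) pp] primes_dvd_imp_eq[OF that(1) pq] by blast
    then show False
    proof
      assume "l = p"
      then have "p * p dvd p * q" using h by (simp add: power2_eq_square)
      then have "p dvd q" using pp by (simp add: prime_gt_0_int)
      then show False using pnq by simp
    next
      assume "l = q"
      then have "q * q dvd q * p" using h by (simp add: power2_eq_square mult.commute)
      then have "q dvd p" using pq by (simp add: prime_gt_0_int)
      then show False using qnp by simp
    qed
  qed
  have pq_eq: "l = p \<or> l = q" if "prime l" "l dvd p*q" for l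
  proof -
    have "l dvd p \<or> l dvd q" using that by (simp add: prime_dvd_mult_iff)
    then show ?thesis using primes_dvd_imp_eq[OF that(1) pp] primes_dvd_imp_eq[OF that(1) pq] by blast
  qed
  have partA1: "\<forall>d. QS2 p q Ds d \<and> (d < 0 \<or> p dvd d \<or> q dvd d) \<longrightarrow> \<not> Selmer_phi p q Ds d"
  proof (intro allI impI notI)
    fix d assume h: "QS2 p q Ds d \<and> (d < 0 \<or> p dvd d \<or> q dvd d)" and S: "Selmer_phi p q Ds d"
    have sqd: "\<not> l^2 dvd d" if "prime l" for l
      using h that unfolding QS2_def squarefree_def by (metis not_prime_unit)
    have CR: "Cd_R p q D d" using S Dd unfolding Selmer_phi_def by simp
    have CQ: "Cd_Ql l p q D d" if "l \<in> {2, p, q}" for l using S Dd that unfolding Selmer_phi_def by auto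
    consider "d < 0" | "p dvd d" | "q dvd d" using h by blast
    then show False
    proof cases
      case 1
      have "\<not> (of_int d * w^2 = of_int d ^ 2 - 2 * of_int (p+q) * of_int D * of_int d * z^2
                      + 4 * of_int D ^ 2 * z^4)" for w z :: real
      proof -
        have dn: "(of_int d :: real) < 0" using 1 by simp
        have "of_int d * w^2 \<le> (0::real)" using dn by (simp add: mult_nonpos_nonneg)
        moreover have "(0::real) < of_int d ^ 2" using dn by simp
        moreover have "0 \<le> - (2 * of_int (p+q) * of_int D * of_int d * z^2 :: real)"
        proof -
          have "0 \<le> (2 * of_int (p+q) * of_int D * (- of_int d) * z^2 :: real)"
            using Dpos dn pp pq prime_gt_0_int[OF pp] prime_gt_0_int[OF pq] by (intro mult_nonneg_nonneg) auto
          then show ?thesis by simp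
        qed
        moreover have "0 \<le> (4 * of_int D ^ 2 * z^4 :: real)" by simp
        ultimately show ?thesis by linarith
      qed
      then show False using CR 1 unfolding Cd_R_def by auto
    next
      case 2
      show False using caseA1[OF pp p2(1) 2 sqd[OF pp] pD] CQ[of p] by simp
    next
      case 3
      show False using caseA1[OF pq p2(2) 3 sqd[OF pq] qD] CQ[of q] by simp
    qed
  qed
  have partA2: "\<forall>d. QS2 p q Ds d \<and> d > 0 \<longrightarrow> Cd_R p q D d"
    unfolding Cd_R_def by blast
  have partB1: "Cd_Ql 2 p q D 2 \<longleftrightarrow> [D * (D - 2*p - 2) = 1] (mod 16)"
    using caseB1only[OF q op oD] B1if[OF q] by blast
  have partB2: "\<forall>l. prime l \<and> l dvd p * q * D \<longrightarrow>
          (Cd_Ql l p q D 2 \<longleftrightarrow> Legendre 2 l = 1)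
          \<and> (Legendre 2 l = 1 \<longleftrightarrow> l mod 8 = 1 \<or> l mod 8 = 7)"
  proof (intro allI impI)
    fix l :: int assume h: "prime l \<and> l dvd p * q * D"
    then have l: "prime l" and lpqD: "l dvd p*q*D" by auto
    have l2: "l \<noteq> 2"
    proof
      assume "l = 2"
      then have "2 dvd p*q*D" using lpqD by simp
      then show False using op oq oD by simp
    qed
    have lg2: "l > 2" using prime_ge_2_int[OF l] l2 by simp
    have nl2: "\<not> l dvd 2" using odd_prime_not_dvd2[OF l l2] .
    have cs: "(l dvd p*q \<and> \<not> l^2 dvd p*q \<and> \<not> l dvd D) \<or> (l dvd D \<and> \<not> l^2 dvd D \<and> \<not> l dvd p*q)"
    proof (cases "l dvd p*q")
      case True
      have "\<not> l dvd D" using pq_eq[OF l True] pD qD by auto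
      then show ?thesis using True pq_cases[OF l True] by blast
    next
      case False
      then have "l dvd D" using lpqD l by (simp add: prime_dvd_mult_iff)
      then show ?thesis using False sqD[OF l] by blast
    qed
    have "Cd_Ql l p q D 2 \<longleftrightarrow> Legendre 2 l = 1"
      using caseQR[OF l l2 nl2 nl2 q hF2 cs] QRif[OF l l2] by blast
    then show "(Cd_Ql l p q D 2 \<longleftrightarrow> Legendre 2 l = 1) \<and> (Legendre 2 l = 1 \<longleftrightarrow> l mod 8 = 1 \<or> l mod 8 = 7)"
      using legendre2[OF l lg2] by blast
  qed
  have partC: "\<forall>i < length Ds.
          (Cd_Ql 2 p q D (Ds ! i) \<longleftrightarrow> [Ds ! i = 1] (mod 4))
          \<and> (\<forall>l. prime l \<and> l dvd p * q * (D div Ds ! i) \<longrightarrow>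
                 (Cd_Ql l p q D (Ds ! i) \<longleftrightarrow> Legendre (Ds ! i) l = 1))
          \<and> (Cd_Ql (Ds ! i) p q D (Ds ! i) \<longleftrightarrow>
                 Legendre (p * (D div Ds ! i)) (Ds ! i) = 1
                 \<and> Legendre (q * (D div Ds ! i)) (Ds ! i) = 1)"
  proof (intro allI impI)
    fix i assume i: "i < length Ds"
    define r where "r = Ds ! i"
    define R where "R = D div r"
    have rin: "r \<in> set Ds" using i unfolding r_def by simp
    have r: "prime r" using rin prs by blast
    have rD: "r dvd D" using elem_dvd_prod[OF rin] Dd by simp
    have DrR: "D = r*R" unfolding R_def using rD by simp
    have r2: "r \<noteq> 2" using rD oD by auto
    have or: "odd r" using r r2 prime_ge_2_int[OF r] by (metis prime_odd_int order_le_less)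
    have oR: "odd R" using oD DrR by simp
    have rR: "\<not> r dvd R"
    proof
      assume "r dvd R"
      then have "r^2 dvd D" unfolding DrR by (simp add: power2_eq_square)
      then show False using sqD[OF r] by simp
    qed
    have rp: "\<not> r dvd p"
    proof
      assume "r dvd p" then have "r = p" using primes_dvd_imp_eq[OF r pp] by simp
      then show False using rD pD by simp
    qed
    have rq: "\<not> r dvd q"
    proof
      assume "r dvd q" then have "r = q" using primes_dvd_imp_eq[OF r pq] by simp
      then show False using rD qD by simp
    qed
    have hFr: "FF p q D r X Y = r^2 * ((2*R*X^2 - (p+1)*Y^2)^2 - p*q*Y^4)" for X Y
      unfolding FF_def q DrR by (simp add: power2_eq_square power4_eq_xxxx algebra_simps)
    have C1: "Cd_Ql 2 p q D r \<longleftrightarrow> [r = 1] (mod 4)"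
      using caseC1only[OF q op or oR DrR] C1if[OF q op or oR DrR] by blast
    have C2: "\<forall>l. prime l \<and> l dvd p * q * R \<longrightarrow> (Cd_Ql l p q D r \<longleftrightarrow> Legendre r l = 1)"
    proof (intro allI impI)
      fix l :: int assume h: "prime l \<and> l dvd p * q * R"
      then have l: "prime l" and lpqR: "l dvd p*q*R" by auto
      have l2: "l \<noteq> 2"
      proof
        assume "l = 2"
        then have "2 dvd p*q*R" using lpqR by simp
        then show False using op oq oR by simp
      qed
      have nl2: "\<not> l dvd 2" using odd_prime_not_dvd2[OF l l2] .
      have lR_D: "l dvd D" if "l dvd R" using that DrR by simp
      have cs: "(l dvd p*q \<and> \<not> l^2 dvd p*q \<and> \<not> l dvd 2*R) \<or> (l dvd 2*R \<and> \<not> l^2 dvd 2*R \<and> \<not> l dvd p*q)"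
      proof (cases "l dvd p*q")
        case True
        have "\<not> l dvd R" using pq_eq[OF l True] pD qD lR_D by auto
        then have "\<not> l dvd 2*R" using nl2 l by (simp add: prime_dvd_mult_iff)
        then show ?thesis using True pq_cases[OF l True] by blast
      next
        case False
        then have lR: "l dvd R" using lpqR l by (simp add: prime_dvd_mult_iff)
        have "\<not> l^2 dvd 2*R"
        proof
          assume "l^2 dvd 2*R"
          moreover have "coprime (l^2) 2" using prime_imp_coprime[OF l nl2] by simp
          ultimately have "l^2 dvd R" by (simp add: coprime_dvd_mult_right_iff)
          then have "l^2 dvd D" unfolding DrR by simp
          then show False using sqD[OF l] by simp
        qed
        then show ?thesis using False lR by simp
      qed
      have nlr: "\<not> l dvd r"
      proof
        assume "l dvd r"
        then have lr: "l = r" using primes_dvd_imp_eq[OF l r] by simp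
        show False
        proof (cases "l dvd p*q")
          case True then show False using pq_eq[OF l True] lr rp rq by auto
        next
          case False
          then have "l dvd R" using lpqR l by (simp add: prime_dvd_mult_iff)
          then show False using lr rR by simp
        qed
      qed
      show "Cd_Ql l p q D r \<longleftrightarrow> Legendre r l = 1"
        using caseQR[OF l l2 nlr nlr q hFr cs] QRif[OF l l2] by blast
    qed
    have aff: "Cd_Ql r p q D r" if "Legendre (p*R) r = 1" "Legendre (q*R) r = 1"
      by (rule C3if[OF q r r2 DrR rR rp rq that]) (rule if_affine; assumption)
    have C3: "Cd_Ql r p q D r \<longleftrightarrow> Legendre (p * R) r = 1 \<and> Legendre (q * R) r = 1"
      using caseC3only[OF q r r2 DrR rR rp rq] aff by blast
    show "(Cd_Ql 2 p q D (Ds ! i) \<longleftrightarrow> [Ds ! i = 1] (mod 4))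
          \<and> (\<forall>l. prime l \<and> l dvd p * q * (D div Ds ! i) \<longrightarrow>
                 (Cd_Ql l p q D (Ds ! i) \<longleftrightarrow> Legendre (Ds ! i) l = 1))
          \<and> (Cd_Ql (Ds ! i) p q D (Ds ! i) \<longleftrightarrow>
                 Legendre (p * (D div Ds ! i)) (Ds ! i) = 1
                 \<and> Legendre (q * (D div Ds ! i)) (Ds ! i) = 1)"
      using C1 C2 C3 unfolding r_def R_def by blast
  qed
  show ?thesis using partA1 partA2 partB1 partB2 partC by blast
qed

end
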